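(* Let $\mathcal{Z}\subset\mathbb{R}^d$ be a convex compact set with $\max_{\mathbf{z},\mathbf{z}'\in\mathcal{Z}}\|\mathbf{z}-\mathbf{z}'\|\le D$, let $F:\mathcal{Z}\to\mathbb{R}^d$ be single-valued, monotone and $L$-Lipschitz continuous, and let $\mathbf{w}_*$ be a solution of $\mathrm{SVI}(F,\mathcal{Z})$. For any $\widehat{\mathbf{z}}\in\mathcal{Z}$ (e.g., the output of any algorithm), define $\bar{\mathbf{z}}=\mathrm{Proj}_{\mathcal{Z}}(\widehat{\mathbf{z}}-\eta F(\widehat{\mathbf{z}}))$ with $\eta=1/(\sqrt2L)$. Then $$\max_{\mathbf{z}\in\mathcal{Z}}F(\bar{\mathbf{z}})^\top(\bar{\mathbf{z}}-\mathbf{z})\le DL(2+\sqrt2)\|\widehat{\mathbf{z}}-\mathbf{w}_*\|.$$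
   Context: $\mathrm{Proj}_{\mathcal{Z}}$ is the Euclidean projection onto $\mathcal{Z}$. $F$ is monotone if $\langle F(\mathbf{z})-F(\mathbf{z}'),\mathbf{z}-\mathbf{z}'\rangle\ge0$ for all $\mathbf{z},\mathbf{z}'\in\mathcal{Z}$. $\mathrm{SVI}(F,\mathcal{Z})$ asks for $\mathbf{w}_*\in\mathcal{Z}$ with $\langle F(\mathbf{w}_* ),\mathbf{z}-\mathbf{w}_*\rangle\ge0$ for all $\mathbf{z}\in\mathcal{Z}$. *)

theory Defs
  imports "HOL-Analysis.Analysis"
begin

definition monotone_op :: "'a::real_inner set \<Rightarrow> ('a \<Rightarrow> 'a) \<Rightarrow> bool" where
  "monotone_op Z F \<longleftrightarrow> (\<forall>z\<in>Z. \<forall>z'\<in>Z. (F z - F z') \<bullet> (z - z') \<ge> 0)"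

definition svi_solution :: "('a::real_inner \<Rightarrow> 'a) \<Rightarrow> 'a set \<Rightarrow> 'a \<Rightarrow> bool" where
  "svi_solution F Z w \<longleftrightarrow> w \<in> Z \<and> (\<forall>z\<in>Z. F w \<bullet> (z - w) \<ge> 0)"

end

theory Submission
  imports Defs
begin

theorem lemma10:
  fixes Z :: "(real ^ 'd) set" and F :: "real ^ 'd \<Rightarrow> real ^ 'd"
    and D L :: real and w zhat :: "real ^ 'd"
  assumes "convex Z" and "compact Z"
    and "\<forall>z\<in>Z. \<forall>z'\<in>Z. norm (z - z') \<le> D"
    and "monotone_op Z F"
    and "L > 0" and "L-lipschitz_on Z F"
    and "svi_solution F Z w"
    and "zhat \<in> Z"
  shows "let \<eta> = 1 / (sqrt 2 * L);
             zbar = closest_point Z (zhat - \<eta> *\<^sub>R F zhat)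
         in \<forall>z\<in>Z. F zbar \<bullet> (zbar - z) \<le> D * L * (2 + sqrt 2) * norm (zhat - w)"
proof -
  define \<eta> where "\<eta> = 1 / (sqrt 2 * L)"
  define u where "u = zhat - \<eta> *\<^sub>R F zhat"
  define zbar where "zbar = closest_point Z u"
  have cl: "closed Z" using assms(2) compact_imp_closed by blast
  have ne: "Z \<noteq> {}" using assms(8) by blast
  have zbZ: "zbar \<in> Z" unfolding zbar_def using closest_point_in_set[OF cl ne] .
  have proj: "(u - zbar) \<bullet> (z - zbar) \<le> 0" if "z \<in> Z" for z
    unfolding zbar_def using closest_point_dot[OF assms(1) cl that] .
  have wZ: "w \<in> Z" and svi: "F w \<bullet> (zbar - w) \<ge> 0"
    using assms(7) zbZ unfolding svi_solution_def by auto
  have eta_pos: "\<eta> > 0" unfolding \<eta>_def using assms(5) by simp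
  have etaL: "\<eta> * L = 1 / sqrt 2" unfolding \<eta>_def using assms(5) by simp
  have lip: "norm (F x - F y) \<le> L * norm (x - y)" if "x \<in> Z" "y \<in> Z" for x y
    using lipschitz_onD[OF assms(6) that] by (simp add: dist_norm)
  define a where "a = zhat - zbar"
  define b where "b = zhat - w"
  define g where "g = \<eta> *\<^sub>R (F zhat - F w)"
  have gn: "norm g \<le> norm b / sqrt 2"
  proof -
    have "norm g = \<eta> * norm (F zhat - F w)" unfolding g_def using eta_pos by simp
    also have "\<dots> \<le> \<eta> * (L * norm b)" unfolding b_def
      using lip[OF assms(8) wZ] eta_pos by (simp add: mult_left_mono)
    also have "\<dots> = (\<eta> * L) * norm b" by (simp only: mult.assoc)
    also have "\<dots> = norm b / sqrt 2" using etaL by simp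
    finally show ?thesis .
  qed
  have gn2: "norm g ^ 2 \<le> norm b ^ 2 / 2"
  proof -
    have "norm g ^ 2 \<le> (norm b / sqrt 2) ^ 2" using gn by (simp add: power_mono)
    thus ?thesis by (simp add: power_divide)
  qed
  have key1: "a \<bullet> (a - b) \<le> g \<bullet> (a - b)"
  proof -
    have "(u - zbar) \<bullet> (w - zbar) \<le> 0" using proj[OF wZ] .
    moreover have "u - zbar = a - \<eta> *\<^sub>R F zhat" unfolding u_def a_def by simp
    moreover have "w - zbar = a - b" unfolding a_def b_def by simp
    ultimately have "a \<bullet> (a - b) \<le> (\<eta> *\<^sub>R F zhat) \<bullet> (a - b)"
      by (simp add: inner_diff_left)
    moreover have "(\<eta> *\<^sub>R F zhat) \<bullet> (a - b) = g \<bullet> (a - b) + \<eta> * (F w \<bullet> (w - zbar))"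
      unfolding g_def a_def b_def by (simp add: algebra_simps inner_diff_left inner_diff_right)
    moreover have "\<eta> * (F w \<bullet> (w - zbar)) \<le> 0"
    proof -
      have "F w \<bullet> (w - zbar) \<le> 0" using svi
        by (metis inner_minus_right minus_diff_eq neg_0_le_iff_le)
      thus ?thesis using eta_pos by (simp add: mult_nonneg_nonpos)
    qed
    ultimately show ?thesis by linarith
  qed
  have amgm: "2 * (g \<bullet> (a - b)) \<le> norm g ^ 2 + norm (a - b) ^ 2"
  proof -
    have "0 \<le> norm (g - (a - b)) ^ 2" by simp
    also have "\<dots> = norm g ^ 2 - 2 * (g \<bullet> (a - b)) + norm (a - b) ^ 2"
      by (simp add: power2_norm_eq_inner inner_diff_left inner_diff_right inner_commute)
    finally show ?thesis by linarith
  qed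
  have e1: "a \<bullet> (a - b) = norm a ^ 2 - a \<bullet> b"
    by (simp add: power2_norm_eq_inner inner_diff_right)
  have e2: "norm (a - b) ^ 2 = norm a ^ 2 - 2 * (a \<bullet> b) + norm b ^ 2"
    by (simp add: power2_norm_eq_inner inner_diff_left inner_diff_right inner_commute)
  have a2: "norm a ^ 2 \<le> 2 * norm b ^ 2"
  proof -
    have B0: "0 \<le> norm b ^ 2" by simp
    have aux: "\<And>A x y G B C :: real. A - x \<le> y \<Longrightarrow> 2 * y \<le> G + C \<Longrightarrow> G \<le> B / 2
      \<Longrightarrow> C = A - 2 * x + B \<Longrightarrow> 0 \<le> B \<Longrightarrow> A \<le> 2 * B" by linarith
    show ?thesis
      by (rule aux[OF _ amgm gn2 e2 B0]) (use key1 e1 in simp)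
  qed
  have an: "norm a \<le> sqrt 2 * norm b"
  proof -
    have "norm a = sqrt (norm a ^ 2)" by simp
    also have "\<dots> \<le> sqrt (2 * norm b ^ 2)" using a2 by (simp only: real_sqrt_le_iff)
    also have "\<dots> = sqrt 2 * norm b" by (simp add: real_sqrt_mult)
    finally show ?thesis .
  qed
  have main: "F zbar \<bullet> (zbar - z) \<le> D * L * (2 + sqrt 2) * norm (zhat - w)" if zZ: "z \<in> Z" for z
  proof -
    have Dz: "norm (zbar - z) \<le> D" using assms(3) zbZ zZ by blast
    have D0: "D \<ge> 0" using Dz norm_ge_zero order_trans by blast
    have t1: "(F zbar - F zhat) \<bullet> (zbar - z) \<le> L * norm a * D"
    proof -
      have "(F zbar - F zhat) \<bullet> (zbar - z) \<le> norm (F zbar - F zhat) * norm (zbar - z)"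
        by (rule norm_cauchy_schwarz)
      also have "\<dots> \<le> (L * norm a) * D"
        apply (rule mult_mono)
        using lip[OF zbZ assms(8)] Dz assms(5)
        by (auto simp: a_def norm_minus_commute)
      finally show ?thesis by simp
    qed
    have t2: "\<eta> * (F zhat \<bullet> (zbar - z)) \<le> norm a * D"
    proof -
      have "\<eta> *\<^sub>R F zhat = a - (u - zbar)" unfolding u_def a_def by simp
      hence "\<eta> * (F zhat \<bullet> (zbar - z)) = (a - (u - zbar)) \<bullet> (zbar - z)"
        by (metis inner_scaleR_left)
      also have "\<dots> = a \<bullet> (zbar - z) + (u - zbar) \<bullet> (z - zbar)"
        by (simp add: inner_diff_left inner_diff_right)
      also have "\<dots> \<le> a \<bullet> (zbar - z)" using proj[OF zZ] by simp
      also have "\<dots> \<le> norm a * norm (zbar - z)" by (rule norm_cauchy_schwarz)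
      also have "\<dots> \<le> norm a * D" using Dz by (simp add: mult_left_mono)
      finally show ?thesis .
    qed
    have t2': "F zhat \<bullet> (zbar - z) \<le> sqrt 2 * L * norm a * D"
    proof -
      have "F zhat \<bullet> (zbar - z) = (sqrt 2 * L) * (\<eta> * (F zhat \<bullet> (zbar - z)))"
        unfolding \<eta>_def using assms(5) by simp
      also have "\<dots> \<le> (sqrt 2 * L) * (norm a * D)"
        using t2 assms(5) by (simp add: mult_left_mono)
      finally show ?thesis by simp
    qed
    have "F zbar \<bullet> (zbar - z) = (F zbar - F zhat) \<bullet> (zbar - z) + F zhat \<bullet> (zbar - z)"
      by (simp add: inner_diff_left)
    also have "\<dots> \<le> (1 + sqrt 2) * L * D * norm a" using t1 t2' by (simp add: algebra_simps)
    also have "\<dots> \<le> (1 + sqrt 2) * L * D * (sqrt 2 * norm b)"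
      using an D0 assms(5) by (simp add: mult_left_mono)
    also have "\<dots> = D * L * (2 + sqrt 2) * norm (zhat - w)"
      unfolding b_def by (simp add: algebra_simps)
    finally show ?thesis .
  qed
  show ?thesis unfolding Let_def using main
    by (simp add: zbar_def u_def \<eta>_def)
qed

end
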